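(* Let $\eta\in(0,1)$ and let $\mathbf{u}\in\mathbb{R}^{d_x}$, $\mathbf{v}\in\mathbb{R}^{d_y}$ be nonzero. If $\mathrm{align}((\mathbf{u},\mathbf{v});(\mathbf{u}^*,\mathbf{v}^* ))\ge1-\frac\eta8$, then $\frac{\mathbf{u}^\top\Sigma_{xy}\mathbf{v}}{\sqrt{\mathbf{u}^\top\Sigma_{xx}\mathbf{u}}\sqrt{\mathbf{v}^\top\Sigma_{yy}\mathbf{v}}}\ge\rho_1(1-\eta)$.
   Context: $\mathbf{x}\in\mathbb{R}^{d_x}$, $\mathbf{y}\in\mathbb{R}^{d_y}$ are zero-mean random vectors with $\Sigma_{xx}=\mathbb{E}\mathbf{x}\mathbf{x}^\top$, $\Sigma_{yy}=\mathbb{E}\mathbf{y}\mathbf{y}^\top$ positive definite and $\Sigma_{xy}=\mathbb{E}\mathbf{x}\mathbf{y}^\top$. $\mathbf{T}=\Sigma_{xx}^{-1/2}\Sigma_{xy}\Sigma_{yy}^{-1/2}$ has largest singular value $\rho_1$ with unit top left/right singular vectors $(\mathbf{a}_1,\mathbf{b}_1)$ (assumed unique up to a common sign, i.e. $\rho_1>\rho_2$), and $(\mathbf{u}^*,\mathbf{v}^* )=(\Sigma_{xx}^{-1/2}\mathbf{a}_1,\Sigma_{yy}^{-1/2}\mathbf{b}_1)$. For nonzero $\mathbf{u},\mathbf{v}$, $\mathrm{align}((\mathbf{u},\mathbf{v});(\mathbf{u}^*,\mathbf{v}^* )):=\frac12\big(\frac{\mathbf{u}^\top\Sigma_{xx}\mathbf{u}^*}{\|\Sigma_{xx}^{1/2}\mathbf{u}\|}+\frac{\mathbf{v}^\top\Sigma_{yy}\mathbf{v}^*}{\|\Sigma_{yy}^{1/2}\mathbf{v}\|}\big)$.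 *)

theory Defs
  imports "HOL-Analysis.Analysis"
begin

definition psd_mat :: "real^'n^'n \<Rightarrow> bool" where
  "psd_mat A \<longleftrightarrow> transpose A = A \<and> (\<forall>p. 0 \<le> p \<bullet> (A *v p))"

definition pd_mat :: "real^'n^'n \<Rightarrow> bool" where
  "pd_mat A \<longleftrightarrow> transpose A = A \<and> (\<forall>p. p \<noteq> 0 \<longrightarrow> 0 < p \<bullet> (A *v p))"

definition msqrt :: "real^'n^'n \<Rightarrow> real^'n^'n" where
  "msqrt A = (THE S. psd_mat S \<and> S ** S = A)"

definition minvsqrt :: "real^'n^'n \<Rightarrow> real^'n^'n" where
  "minvsqrt A = matrix_inv (msqrt A)"

text \<open>(Cxx, Cxy, Cyy) are the covariance blocks of a pair of zero-mean random
  vectors (x,y) with Cxx, Cyy positive definite: equivalently the joint covariance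
  matrix [[Cxx, Cxy],[Cxy^T, Cyy]] is PSD.\<close>
definition cov_blocks :: "real^'a^'a \<Rightarrow> real^'b^'a \<Rightarrow> real^'b^'b \<Rightarrow> bool" where
  "cov_blocks Cxx Cxy Cyy \<longleftrightarrow> pd_mat Cxx \<and> pd_mat Cyy \<and>
     (\<forall>p q. 0 \<le> p \<bullet> (Cxx *v p) + 2 * (p \<bullet> (Cxy *v q)) + q \<bullet> (Cyy *v q))"

definition Tmat :: "real^'a^'a \<Rightarrow> real^'b^'a \<Rightarrow> real^'b^'b \<Rightarrow> real^'b^'a" where
  "Tmat Cxx Cxy Cyy = minvsqrt Cxx ** Cxy ** minvsqrt Cyy"

definition sing_pair :: "real^'b^'a \<Rightarrow> real \<Rightarrow> real^'a \<Rightarrow> real^'b \<Rightarrow> bool" where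
  "sing_pair T s a b \<longleftrightarrow> 0 \<le> s \<and> norm a = 1 \<and> norm b = 1 \<and>
     T *v b = s *\<^sub>R a \<and> transpose T *v a = s *\<^sub>R b"

definition top_sing_pair :: "real^'b^'a \<Rightarrow> real \<Rightarrow> real^'a \<Rightarrow> real^'b \<Rightarrow> bool" where
  "top_sing_pair T s a b \<longleftrightarrow> sing_pair T s a b \<and>
     (\<forall>s' a' b'. sing_pair T s' a' b' \<longrightarrow> s' \<le> s)"

definition align :: "real^'a^'a \<Rightarrow> real^'b^'b \<Rightarrow> real^'a \<Rightarrow> real^'b \<Rightarrow> real^'a \<Rightarrow> real^'b \<Rightarrow> real" where
  "align Cxx Cyy u v us vs =
     (1/2) * ((u \<bullet> (Cxx *v us)) / norm (msqrt Cxx *v u)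
            + (v \<bullet> (Cyy *v vs)) / norm (msqrt Cyy *v v))"

end

theory Submission imports Defs begin
lemma dotT: "(x::real^'m) \<bullet> (A *v y) = (transpose A *v x) \<bullet> (y::real^'n)"
  by (simp add: dot_lmul_matrix)
lemma symdot: "transpose A = A \<Longrightarrow> (x::real^'n) \<bullet> (A *v y) = (A *v x) \<bullet> y"
  by (metis dotT)

lemma rayleigh_eigen:
  fixes A :: "real^'n^'n"
  assumes sym: "transpose A = A" and V: "subspace V" and inv: "\<forall>x\<in>V. A *v x \<in> V"
    and x0: "x0 \<in> V" "norm x0 = 1"
    and mx: "\<forall>y\<in>V. y \<bullet> (A *v y) \<le> (x0 \<bullet> (A *v x0)) * (y \<bullet> y)"
  shows "A *v x0 = (x0 \<bullet> (A *v x0)) *\<^sub>R x0"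
proof -
  define l where "l = x0 \<bullet> (A *v x0)"
  define w where "w = A *v x0 - l *\<^sub>R x0"
  have xx: "x0 \<bullet> x0 = 1" using x0(2) by (simp add: dot_square_norm)
  have wV: "w \<in> V" unfolding w_def using V inv x0(1)
    by (simp add: subspace_diff subspace_scale)
  have wx: "w \<bullet> x0 = 0" unfolding w_def l_def using xx
    by (simp add: inner_diff_left inner_diff_right inner_commute)
  have wAx: "w \<bullet> (A *v x0) = w \<bullet> w"
  proof -
    have "A *v x0 = w + l *\<^sub>R x0" unfolding w_def by simp
    then show ?thesis using wx by (simp add: inner_add_right)
  qed
  have xAw: "x0 \<bullet> (A *v w) = w \<bullet> w" using symdot[OF sym, of x0 w] wAx
    by (simp add: inner_commute)
  define a where "a = w \<bullet> w"
  define c where "c = w \<bullet> (A *v w)"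
  have key: "2 * t * a \<le> t * t * (l * a - c)" for t :: real
  proof -
    have yV: "x0 + t *\<^sub>R w \<in> V" using V wV x0(1) by (simp add: subspace_add subspace_scale)
    have "(x0 + t *\<^sub>R w) \<bullet> (A *v (x0 + t *\<^sub>R w)) = l + 2 * t * a + t * t * c"
      unfolding l_def a_def c_def
      by (simp add: matrix_vector_right_distrib inner_add_left inner_add_right
          matrix_vector_mult_scaleR wAx xAw algebra_simps)
    moreover have "(x0 + t *\<^sub>R w) \<bullet> (x0 + t *\<^sub>R w) = 1 + t * t * a"
      unfolding a_def using xx wx
      by (simp add: inner_add_left inner_add_right inner_commute algebra_simps)
    ultimately have "l + 2 * t * a + t * t * c \<le> l * (1 + t * t * a)"
      using mx yV unfolding l_def[symmetric] by metis
    then show ?thesis by (simp add: algebra_simps)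
  qed
  have "a \<le> 0"
  proof (rule ccontr)
    assume "\<not> a \<le> 0"
    hence ap: "a > 0" by simp
    define D where "D = l * a - c"
    define t where "t = a / (\<bar>D\<bar> + 1)"
    have tp: "t > 0" unfolding t_def using ap by simp
    have "2 * t * a \<le> t * t * D" using key[of t] unfolding D_def .
    hence "t * (2 * a) \<le> t * (t * D)" by (simp add: algebra_simps)
    hence "2 * a \<le> t * D" using tp by (simp add: mult_le_cancel_left_pos)
    also have "t * D \<le> t * \<bar>D\<bar>" using tp by (simp add: mult_left_mono)
    also have "t * \<bar>D\<bar> < a" unfolding t_def using ap
      by (simp add: field_simps)
    finally show False using ap by simp
  qed
  hence "w = 0" unfolding a_def by (metis inner_eq_zero_iff inner_ge_zero order_antisym)
  thus ?thesis unfolding w_def l_def by simp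
qed

lemma spectral_sub:
  fixes A :: "real^'n^'n"
  assumes sym: "transpose A = A"
  shows "subspace V \<Longrightarrow> (\<forall>x\<in>V. A *v x \<in> V) \<Longrightarrow>
    \<exists>B. B \<subseteq> V \<and> pairwise orthogonal B \<and>
        (\<forall>e\<in>B. norm e = 1 \<and> A *v e = (e \<bullet> (A *v e)) *\<^sub>R e) \<and> span B = V"
proof (induction "dim V" arbitrary: V rule: less_induct)
  case less
  show ?case
  proof (cases "V \<subseteq> {0}")
    case True
    then have "V = {0}" using less.prems(1) subspace_0 by blast
    then show ?thesis by (intro exI[of _ "{}"]) auto
  next
    case False
    then obtain z where z: "z \<in> V" "z \<noteq> 0" by auto
    define K where "K = V \<inter> sphere 0 1"
    have Kc: "compact K" unfolding K_def
      using closed_subspace[OF less.prems(1)] by (simp add: closed_Int_compact)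
    have "(1 / norm z) *\<^sub>R z \<in> K" unfolding K_def using z less.prems(1)
      by (simp add: subspace_scale)
    hence Kne: "K \<noteq> {}" by auto
    have "continuous_on K (\<lambda>x::real^'n. x \<bullet> (A *v x))" by (intro continuous_intros)
    from continuous_attains_sup[OF Kc Kne this] obtain x0 where
      x0K: "x0 \<in> K" and x0m: "\<forall>y\<in>K. y \<bullet> (A *v y) \<le> x0 \<bullet> (A *v x0)" by blast
    have x0V: "x0 \<in> V" and nx0: "norm x0 = 1" using x0K unfolding K_def by auto
    define l where "l = x0 \<bullet> (A *v x0)"
    have mx: "\<forall>y\<in>V. y \<bullet> (A *v y) \<le> l * (y \<bullet> y)"
    proof
      fix y assume yV: "y \<in> V"
      show "y \<bullet> (A *v y) \<le> l * (y \<bullet> y)"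
      proof (cases "y = 0")
        case True then show ?thesis by simp
      next
        case False
        define y' where "y' = (1 / norm y) *\<^sub>R y"
        have "y' \<in> K" unfolding K_def y'_def using yV False less.prems(1)
          by (simp add: subspace_scale)
        hence "y' \<bullet> (A *v y') \<le> l" using x0m l_def by blast
        moreover have "y' \<bullet> (A *v y') = (y \<bullet> (A *v y)) / (y \<bullet> y)"
          unfolding y'_def by (simp add: matrix_vector_mult_scaleR dot_square_norm power2_eq_square)
        moreover have "y \<bullet> y > 0" using False by simp
        ultimately show ?thesis by (simp add: divide_le_eq mult.commute)
      qed
    qed
    have eig: "A *v x0 = l *\<^sub>R x0"
      using rayleigh_eigen[OF sym less.prems(1) less.prems(2) x0V nx0] mx unfolding l_def by blast
    define V' where "V' = {x \<in> V. x \<bullet> x0 = 0}"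
    have sV': "subspace V'" unfolding V'_def subspace_def using less.prems(1)
      by (auto simp: subspace_add subspace_scale subspace_0 inner_add_left)
    have iV': "\<forall>x\<in>V'. A *v x \<in> V'"
    proof
      fix x assume "x \<in> V'"
      hence "x \<in> V" "x \<bullet> x0 = 0" unfolding V'_def by auto
      moreover have "(A *v x) \<bullet> x0 = x \<bullet> (A *v x0)" using symdot[OF sym, of x x0] by (simp add: inner_commute)
      ultimately show "A *v x \<in> V'" unfolding V'_def using less.prems(2) eig
        by (simp add: inner_commute)
    qed
    have "x0 \<notin> V'" unfolding V'_def using nx0 by (auto simp: dot_square_norm)
    moreover have "V' \<subseteq> V" unfolding V'_def by auto
    ultimately have ps: "V' \<subset> V" using x0V by blast
    have s1: "span V' = V'" using sV' by (simp add: span_eq_iff)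
    have s2: "span V = V" using less.prems(1) by (simp add: span_eq_iff)
    have "span V' \<subset> span V" unfolding s1 s2 by (rule ps)
    hence "dim V' < dim V" by (rule dim_psubset)
    from less.hyps[OF this sV' iV'] obtain B' where
      B': "B' \<subseteq> V'" "pairwise orthogonal B'"
          "\<forall>e\<in>B'. norm e = 1 \<and> A *v e = (e \<bullet> (A *v e)) *\<^sub>R e" "span B' = V'" by blast
    define B where "B = insert x0 B'"
    have "B \<subseteq> V" unfolding B_def using B'(1) x0V V'_def by auto
    moreover have "pairwise orthogonal B" unfolding B_def using B'(1,2) V'_def
      by (auto simp: pairwise_insert orthogonal_def inner_commute)
    moreover have "\<forall>e\<in>B. norm e = 1 \<and> A *v e = (e \<bullet> (A *v e)) *\<^sub>R e"
      unfolding B_def using B'(3) nx0 eig l_def by auto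
    moreover have "span B = V"
    proof
      show "span B \<subseteq> V" using \<open>B \<subseteq> V\<close> less.prems(1) by (simp add: span_minimal)
      show "V \<subseteq> span B"
      proof
        fix x assume xV: "x \<in> V"
        have "x - (x \<bullet> x0) *\<^sub>R x0 \<in> V'" unfolding V'_def using xV x0V less.prems(1) nx0
          by (simp add: subspace_diff subspace_scale inner_diff_left dot_square_norm)
        hence "x - (x \<bullet> x0) *\<^sub>R x0 \<in> span B" using B'(4) unfolding B_def
          by (metis span_mono subset_insertI subsetD)
        moreover have "(x \<bullet> x0) *\<^sub>R x0 \<in> span B" unfolding B_def
          by (simp add: span_base span_mul)
        ultimately have "(x - (x \<bullet> x0) *\<^sub>R x0) + (x \<bullet> x0) *\<^sub>R x0 \<in> span B"
          by (rule span_add)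
        thus "x \<in> span B" by simp
      qed
    qed
    ultimately show ?thesis by blast
  qed
qed



lemma onb_dot_sum:
  fixes B :: "(real^'n) set"
  assumes fin: "finite B" and po: "pairwise orthogonal B" and un: "\<forall>e\<in>B. norm e = 1"
    and e: "e \<in> B"
  shows "e \<bullet> (\<Sum>e'\<in>B. c e' *\<^sub>R e') = c e"
proof -
  have "e \<bullet> (\<Sum>e'\<in>B. c e' *\<^sub>R e') = (\<Sum>e'\<in>B. c e' * (e \<bullet> e'))"
    by (simp add: inner_sum_right)
  also have "\<dots> = c e * (e \<bullet> e) + (\<Sum>e'\<in>B - {e}. c e' * (e \<bullet> e'))"
    using fin e by (simp add: sum.remove)
  also have "(\<Sum>e'\<in>B - {e}. c e' * (e \<bullet> e')) = 0"
    using po e by (intro sum.neutral) (auto simp: pairwise_def orthogonal_def)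
  also have "e \<bullet> e = 1" using un e by (simp add: dot_square_norm)
  finally show ?thesis by simp
qed

lemma matrix_of_sum:
  fixes B :: "(real^'n) set"
  shows "(\<chi> i j. \<Sum>e\<in>B. g e * (e $ i * e $ j)) *v x = (\<Sum>e\<in>B. (g e * (e \<bullet> x)) *\<^sub>R e)"
  by (simp add: vec_eq_iff matrix_vector_mult_def inner_vec_def sum_distrib_left
      sum_distrib_right sum_component algebra_simps sum.swap[of _ UNIV B])


lemma spectral_full:
  fixes A :: "real^'n^'n"
  assumes sym: "transpose A = A"
  obtains B where "finite B" "pairwise orthogonal B"
    "\<forall>e\<in>B. norm e = 1 \<and> A *v e = (e \<bullet> (A *v e)) *\<^sub>R e"
    "\<And>x. x = (\<Sum>e\<in>B. (e \<bullet> x) *\<^sub>R e)"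
proof -
  obtain B where B: "pairwise orthogonal B"
    "\<forall>e\<in>B. norm e = 1 \<and> A *v e = (e \<bullet> (A *v e)) *\<^sub>R e" "span B = UNIV"
    using spectral_sub[OF sym, of UNIV] by auto
  have "0 \<notin> B" using B(2) by force
  hence fin: "finite B" using pairwise_orthogonal_independent[OF B(1)] eucl.finiteI_independent by blast
  have exp: "x = (\<Sum>e\<in>B. (e \<bullet> x) *\<^sub>R e)" for x
  proof -
    define y where "y = x - (\<Sum>e\<in>B. (e \<bullet> x) *\<^sub>R e)"
    have "orthogonal y e" if "e \<in> B" for e
    proof -
      have "e \<bullet> y = e \<bullet> x - e \<bullet> (\<Sum>e\<in>B. (e \<bullet> x) *\<^sub>R e)" unfolding y_def by (simp add: inner_diff_right)
      also have "\<dots> = 0" using onb_dot_sum[OF fin B(1) _ that, of "\<lambda>e. e \<bullet> x"] B(2) by simp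
      finally show ?thesis by (simp add: orthogonal_def inner_commute)
    qed
    hence "orthogonal y y" using orthogonal_to_span[of y B y] B(3) by auto
    hence "y = 0" by (simp add: orthogonal_def)
    thus ?thesis unfolding y_def by simp
  qed
  show ?thesis using that fin B(1,2) exp by blast
qed

lemma psd_sqrt_ex1:
  fixes A :: "real^'n^'n"
  assumes psd: "psd_mat A"
  shows "\<exists>!S. psd_mat S \<and> S ** S = A"
proof -
  have sym: "transpose A = A" using psd unfolding psd_mat_def by simp
  obtain B where fin: "finite B" and po: "pairwise orthogonal B"
    and eB: "\<forall>e\<in>B. norm e = 1 \<and> A *v e = (e \<bullet> (A *v e)) *\<^sub>R e"
    and ex: "\<And>x. x = (\<Sum>e\<in>B. (e \<bullet> x) *\<^sub>R e)"
    using spectral_full[OF sym] by blast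
  have un: "\<forall>e\<in>B. norm e = 1" using eB by blast
  define lam where "lam e = e \<bullet> (A *v e)" for e
  have lam0: "lam e \<ge> 0" for e using psd unfolding psd_mat_def lam_def by blast
  have Ae: "A *v e = lam e *\<^sub>R e" if "e \<in> B" for e using eB that unfolding lam_def by blast
  have Ax: "A *v x = (\<Sum>e\<in>B. (lam e * (e \<bullet> x)) *\<^sub>R e)" for x
  proof -
    have "A *v x = (\<Sum>e\<in>B. (e \<bullet> (A *v x)) *\<^sub>R e)" by (rule ex)
    also have "\<dots> = (\<Sum>e\<in>B. (lam e * (e \<bullet> x)) *\<^sub>R e)"
    proof (rule sum.cong[OF refl])
      fix e assume "e \<in> B"
      have "e \<bullet> (A *v x) = (A *v e) \<bullet> x" by (rule symdot[OF sym])
      thus "(e \<bullet> (A *v x)) *\<^sub>R e = (lam e * (e \<bullet> x)) *\<^sub>R e" using Ae[OF \<open>e \<in> B\<close>] by simp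
    qed
    finally show ?thesis .
  qed
  define S :: "real^'n^'n" where "S = (\<chi> i j. \<Sum>e\<in>B. sqrt (lam e) * (e $ i * e $ j))"
  have Sx: "S *v x = (\<Sum>e\<in>B. (sqrt (lam e) * (e \<bullet> x)) *\<^sub>R e)" for x
    unfolding S_def by (rule matrix_of_sum)
  have Strans: "transpose S = S" unfolding S_def transpose_def by (simp add: mult.commute)
  have eS: "e \<bullet> (S *v x) = sqrt (lam e) * (e \<bullet> x)" if "e \<in> B" for e x
    unfolding Sx using onb_dot_sum[OF fin po un that] by simp
  have Spsd: "psd_mat S" unfolding psd_mat_def
  proof (intro conjI allI Strans)
    fix p
    have "p \<bullet> (S *v p) = (\<Sum>e\<in>B. sqrt (lam e) * (e \<bullet> p) * (e \<bullet> p))"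
      unfolding Sx by (simp add: inner_sum_right inner_commute)
    also have "\<dots> \<ge> 0" using lam0 by (intro sum_nonneg) (simp add: mult.assoc)
    finally show "0 \<le> p \<bullet> (S *v p)" .
  qed
  have SS: "S ** S = A"
  proof -
    have "(S ** S) *v x = A *v x" for x
    proof -
      have "(S ** S) *v x = S *v (S *v x)" by (simp add: matrix_vector_mul_assoc)
      also have "\<dots> = (\<Sum>e\<in>B. (sqrt (lam e) * (sqrt (lam e) * (e \<bullet> x))) *\<^sub>R e)"
        unfolding Sx[of "S *v x"] using eS by (intro sum.cong) auto
      also have "\<dots> = A *v x" unfolding Ax using lam0
        by (intro sum.cong) (auto simp: real_sqrt_mult[symmetric] mult.assoc[symmetric])
      finally show ?thesis .
    qed
    thus ?thesis by (simp add: matrix_eq)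
  qed
  have uniq: "R = S" if R: "psd_mat R" "R ** R = A" for R
  proof -
    have Rsym: "transpose R = R" using R(1) unfolding psd_mat_def by simp
    have RR: "R *v (R *v x) = A *v x" for x using R(2) by (simp add: matrix_vector_mul_assoc)
    have Re: "R *v e = sqrt (lam e) *\<^sub>R e" if eB: "e \<in> B" for e
    proof (cases "lam e = 0")
      case True
      have "(R *v e) \<bullet> (R *v e) = e \<bullet> (R *v (R *v e))" using symdot[OF Rsym] by metis
      also have "\<dots> = 0" using RR Ae[OF eB] True by simp
      finally show ?thesis using True by simp
    next
      case False
      hence lp: "lam e > 0" using lam0[of e] by simp
      define s where "s = sqrt (lam e)"
      have sp: "s > 0" using lp unfolding s_def by simp
      define w where "w = R *v e - s *\<^sub>R e"
      have "R *v w = A *v e - s *\<^sub>R (R *v e)" unfolding w_def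
        by (simp add: matrix_vector_right_distrib matrix_vector_mult_diff_distrib
            matrix_vector_mult_scaleR RR)
      also have "\<dots> = (s * s) *\<^sub>R e - s *\<^sub>R (R *v e)" using Ae[OF eB] lam0[of e]
        unfolding s_def by (simp add: real_sqrt_mult[symmetric])
      also have "\<dots> = (- s) *\<^sub>R w" unfolding w_def by (simp add: algebra_simps)
      finally have Rw: "R *v w = (- s) *\<^sub>R w" .
      have "0 \<le> w \<bullet> (R *v w)" using R(1) unfolding psd_mat_def by blast
      hence "0 \<le> - s * (w \<bullet> w)" unfolding Rw by simp
      hence "w \<bullet> w \<le> 0" using sp by (simp add: mult_le_0_iff)
      hence "w = 0" by (metis inner_eq_zero_iff inner_ge_zero order_antisym)
      thus ?thesis unfolding w_def s_def by simp
    qed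
    have "R *v x = S *v x" for x
    proof -
      have "R *v x = R *v (\<Sum>e\<in>B. (e \<bullet> x) *\<^sub>R e)" using ex[of x] by simp
      also have "\<dots> = (\<Sum>e\<in>B. (e \<bullet> x) *\<^sub>R (R *v e))"
        by (simp add: vec.sum matrix_vector_mult_scaleR)
      also have "\<dots> = S *v x" unfolding Sx using Re by (intro sum.cong) auto
      finally show ?thesis .
    qed
    thus ?thesis by (simp add: matrix_eq)
  qed
  show ?thesis using Spsd SS uniq by blast
qed


lemma pd_psd: "pd_mat A \<Longrightarrow> psd_mat A"
  unfolding pd_mat_def psd_mat_def by (metis order_refl inner_zero_left order_less_imp_le)

lemma sqrt_facts:
  fixes A :: "real^'n^'n"
  assumes pd: "pd_mat A"
  shows "transpose (msqrt A) = msqrt A" "msqrt A *v (msqrt A *v x) = A *v x"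
    "msqrt A *v (minvsqrt A *v x) = x" "minvsqrt A *v (msqrt A *v x) = x"
    "x \<bullet> (minvsqrt A *v y) = (minvsqrt A *v x) \<bullet> y"
proof -
  have th: "psd_mat (msqrt A) \<and> msqrt A ** msqrt A = A"
    unfolding msqrt_def by (rule theI'[OF psd_sqrt_ex1[OF pd_psd[OF pd]]])
  define S where "S = msqrt A"
  define W where "W = minvsqrt A"
  have Ss: "transpose S = S" using th unfolding S_def psd_mat_def by simp
  have SS: "S *v (S *v x) = A *v x" for x using th unfolding S_def by (simp add: matrix_vector_mul_assoc)
  have "\<forall>x. S *v x = 0 \<longrightarrow> x = 0"
  proof (intro allI impI)
    fix x assume "S *v x = 0"
    hence "A *v x = 0" using SS[of x] by simp
    hence "x \<bullet> (A *v x) = 0" by simp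
    thus "x = 0" using pd unfolding pd_mat_def by force
  qed
  hence "invertible S" using matrix_left_invertible_ker invertible_left_inverse by blast
  hence "S ** W = mat 1 \<and> W ** S = mat 1" unfolding W_def minvsqrt_def S_def[symmetric]
    matrix_inv_def invertible_def by (rule someI_ex)
  hence SW: "S *v (W *v x) = x" and WS: "W *v (S *v x) = x" for x
    by (simp_all add: matrix_vector_mul_assoc)
  show "transpose (msqrt A) = msqrt A" using Ss S_def by simp
  show "msqrt A *v (msqrt A *v x) = A *v x" using SS S_def by simp
  show "msqrt A *v (minvsqrt A *v x) = x" using SW S_def W_def by simp
  show "minvsqrt A *v (msqrt A *v x) = x" using WS S_def W_def by simp
  have "x \<bullet> (W *v y) = (S *v (W *v x)) \<bullet> (W *v y)" using SW by simp
  also have "\<dots> = (W *v x) \<bullet> (S *v (W *v y))" using symdot[OF Ss] by metis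
  also have "\<dots> = (W *v x) \<bullet> y" using SW by simp
  finally show "x \<bullet> (minvsqrt A *v y) = (minvsqrt A *v x) \<bullet> y" using W_def by simp
qed

lemma opnorm_top:
  fixes T :: "real^'b^'a"
  assumes top: "top_sing_pair T r a b"
  shows "(x::real^'a) \<bullet> (T *v y) \<le> r * norm x * norm y"
proof -
  define K :: "((real^'a) \<times> (real^'b)) set" where "K = sphere 0 1 \<times> sphere 0 1"
  have Kc: "compact K" unfolding K_def by (intro compact_Times compact_sphere)
  have Kne: "K \<noteq> {}" unfolding K_def
    using norm_axis_1[of undefined] by (metis SigmaI empty_iff mem_sphere_0)
  have cT: "continuous_on UNIV ((*v) T)"
    by (rule linear_continuous_on[OF matrix_vector_mul_bounded_linear])
  have "continuous_on K (\<lambda>z. T *v snd z)"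
    using continuous_on_compose2[OF cT continuous_on_snd[OF continuous_on_id]] by auto
  hence "continuous_on K (\<lambda>z. fst z \<bullet> (T *v snd z))" by (intro continuous_intros)
  from continuous_attains_sup[OF Kc Kne this] obtain z0 where
    z0K: "z0 \<in> K" and z0m: "\<forall>z\<in>K. fst z \<bullet> (T *v snd z) \<le> fst z0 \<bullet> (T *v snd z0)" by blast
  obtain p0 q0 where z0: "z0 = (p0, q0)" by fastforce
  have np: "norm p0 = 1" and nq: "norm q0 = 1" using z0K z0 K_def by auto
  define s where "s = p0 \<bullet> (T *v q0)"
  have mx: "p \<bullet> (T *v q) \<le> s" if "norm p = 1" "norm q = 1" for p q
    using z0m[rule_format, of "(p,q)"] that unfolding K_def z0 s_def by auto
  have s0: "s \<ge> 0" using mx[of "-p0" q0] np nq unfolding s_def by simp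
  have pp: "p0 \<bullet> p0 = 1" "q0 \<bullet> q0 = 1" using np nq by (simp_all add: dot_square_norm)
  have nTq: "norm (T *v q0) = s"
  proof -
    have "s \<le> norm (T *v q0)" unfolding s_def using norm_cauchy_schwarz[of p0 "T *v q0"] np by simp
    moreover have "norm (T *v q0) \<le> s"
    proof (cases "T *v q0 = 0")
      case True then show ?thesis using s0 by simp
    next
      case False
      have "(1 / norm (T *v q0)) *\<^sub>R (T *v q0) \<bullet> (T *v q0) \<le> s"
        using mx[of "(1 / norm (T *v q0)) *\<^sub>R (T *v q0)" q0] nq False by simp
      thus ?thesis using False by (simp add: dot_square_norm power2_eq_square)
    qed
    ultimately show ?thesis by simp
  qed
  have e1: "T *v q0 = s *\<^sub>R p0"
  proof -
    have "(T *v q0 - s *\<^sub>R p0) \<bullet> (T *v q0 - s *\<^sub>R p0)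
        = (T *v q0) \<bullet> (T *v q0) - 2 * s * (p0 \<bullet> (T *v q0)) + s * s * (p0 \<bullet> p0)"
      by (simp add: inner_diff_left inner_diff_right inner_commute algebra_simps)
    also have "\<dots> = 0" using nTq pp unfolding s_def[symmetric]
      by (simp add: dot_square_norm power2_eq_square)
    finally show ?thesis by simp
  qed
  define T' where "T' = transpose T"
  have dT: "p \<bullet> (T *v q) = (T' *v p) \<bullet> q" for p q unfolding T'_def by (rule dotT)
  have nTp: "norm (T' *v p0) = s"
  proof -
    have "s \<le> norm (T' *v p0)" unfolding s_def dT using norm_cauchy_schwarz[of "T' *v p0" q0] nq by simp
    moreover have "norm (T' *v p0) \<le> s"
    proof (cases "T' *v p0 = 0")
      case True then show ?thesis using s0 by simp
    next
      case False
      have "p0 \<bullet> (T *v ((1 / norm (T' *v p0)) *\<^sub>R (T' *v p0))) \<le> s"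
        using mx[of p0 "(1 / norm (T' *v p0)) *\<^sub>R (T' *v p0)"] np False by simp
      thus ?thesis using False unfolding dT by (simp add: dot_square_norm power2_eq_square)
    qed
    ultimately show ?thesis by simp
  qed
  have e2: "T' *v p0 = s *\<^sub>R q0"
  proof -
    have "(T' *v p0 - s *\<^sub>R q0) \<bullet> (T' *v p0 - s *\<^sub>R q0)
        = (T' *v p0) \<bullet> (T' *v p0) - 2 * s * ((T' *v p0) \<bullet> q0) + s * s * (q0 \<bullet> q0)"
      by (simp add: inner_diff_left inner_diff_right inner_commute algebra_simps)
    also have "\<dots> = 0" using nTp pp unfolding s_def dT
      by (simp add: dot_square_norm power2_eq_square)
    finally show ?thesis by simp
  qed
  have "sing_pair T s p0 q0" unfolding sing_pair_def using s0 np nq e1 e2 T'_def by simp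
  hence sr: "s \<le> r" using top unfolding top_sing_pair_def by blast
  show ?thesis
  proof (cases "x = 0 \<or> y = 0")
    case True then show ?thesis by auto
  next
    case False
    hence nx: "norm x > 0" and ny: "norm y > 0" by auto
    have "((1 / norm x) *\<^sub>R x) \<bullet> (T *v ((1 / norm y) *\<^sub>R y)) \<le> s"
      using mx[of "(1 / norm x) *\<^sub>R x" "(1 / norm y) *\<^sub>R y"] nx ny by simp
    hence "(x \<bullet> (T *v y)) / (norm x * norm y) \<le> r" using sr
      by (simp add: matrix_vector_mult_scaleR mult.commute)
    thus ?thesis using nx ny by (simp add: divide_le_eq mult.assoc)
  qed
qed


lemma final_alg:
  fixes T :: "real^'b^'a" and p a :: "real^'a" and q b :: "real^'b"
  assumes np: "norm p = 1" and nq: "norm q = 1" and na: "norm a = 1" and nb: "norm b = 1"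
    and Tb: "T *v b = r *\<^sub>R a" and Ta: "transpose T *v a = r *\<^sub>R b" and r0: "r \<ge> 0"
    and op: "\<And>x y. x \<bullet> (T *v y) \<le> r * norm x * norm y"
    and al: "(p \<bullet> a + q \<bullet> b) / 2 \<ge> 1 - eta / 8" and eta: "0 < eta" "eta < 1"
  shows "p \<bullet> (T *v q) \<ge> r * (1 - eta)"
proof -
  define \<alpha> where "\<alpha> = p \<bullet> a"
  define \<beta> where "\<beta> = q \<bullet> b"
  define p' where "p' = p - \<alpha> *\<^sub>R a"
  define q' where "q' = q - \<beta> *\<^sub>R b"
  have aa: "a \<bullet> a = 1" "b \<bullet> b = 1" "p \<bullet> p = 1" "q \<bullet> q = 1"
    using np nq na nb by (simp_all add: dot_square_norm)
  have pa: "p' \<bullet> a = 0" unfolding p'_def \<alpha>_def using aa by (simp add: inner_diff_left)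
  have qb: "q' \<bullet> b = 0" unfolding q'_def \<beta>_def using aa by (simp add: inner_diff_left)
  have np': "p' \<bullet> p' = 1 - \<alpha> * \<alpha>" unfolding p'_def \<alpha>_def using aa
    by (simp add: inner_diff_left inner_diff_right inner_commute algebra_simps)
  have nq': "q' \<bullet> q' = 1 - \<beta> * \<beta>" unfolding q'_def \<beta>_def using aa
    by (simp add: inner_diff_left inner_diff_right inner_commute algebra_simps)
  have q_eq: "q = \<beta> *\<^sub>R b + q'" and p_eq: "p = \<alpha> *\<^sub>R a + p'" unfolding q'_def p'_def by simp_all
  have Tq: "T *v q = (\<beta> * r) *\<^sub>R a + T *v q'"
    by (subst q_eq) (simp add: matrix_vector_right_distrib matrix_vector_mult_scaleR Tb)
  have "p \<bullet> (T *v q') = (transpose T *v p) \<bullet> q'" by (rule dotT)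
  also have "transpose T *v p = (\<alpha> * r) *\<^sub>R b + transpose T *v p'"
    using Ta by (subst p_eq) (simp add: matrix_vector_right_distrib matrix_vector_mult_scaleR)
  also have "((\<alpha> * r) *\<^sub>R b + transpose T *v p') \<bullet> q' = (transpose T *v p') \<bullet> q'"
    using qb by (simp only: inner_add_left inner_scaleR_left) (simp add: inner_commute)
  also have "\<dots> = p' \<bullet> (T *v q')" by (rule dotT[symmetric])
  finally have pTq': "p \<bullet> (T *v q') = p' \<bullet> (T *v q')" .
  have main: "p \<bullet> (T *v q) = \<alpha> * \<beta> * r + p' \<bullet> (T *v q')"
    unfolding Tq by (simp add: inner_add_right pTq' \<alpha>_def)
  have "(- p') \<bullet> (T *v q') \<le> r * norm p' * norm q'" using op[of "-p'" q'] by simp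
  hence b1: "p' \<bullet> (T *v q') \<ge> - (r * (norm p' * norm q'))" by (simp add: mult.assoc)
  have "norm p' * norm q' \<le> (norm p' ^ 2 + norm q' ^ 2) / 2"
    using sum_squares_ge_zero[of "norm p' - norm q'" 0] by (simp add: power2_eq_square algebra_simps)
  also have "\<dots> = (2 - \<alpha> * \<alpha> - \<beta> * \<beta>) / 2" using np' nq' by (simp add: dot_square_norm[symmetric])
  finally have b2: "norm p' * norm q' \<le> (2 - \<alpha> * \<alpha> - \<beta> * \<beta>) / 2" .
  have sab: "\<alpha> + \<beta> \<ge> 2 - eta / 4" using al unfolding \<alpha>_def \<beta>_def by simp
  have "(2 - eta / 4) ^ 2 \<le> (\<alpha> + \<beta>) ^ 2" using sab eta by (intro power_mono) auto
  hence h: "4 - eta + eta * eta / 16 \<le> \<alpha> * \<alpha> + \<beta> * \<beta> + 2 * (\<alpha> * \<beta>)"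
    by (simp add: power2_eq_square algebra_simps)
  define X where "X = \<alpha> * \<alpha> + \<beta> * \<beta> + 2 * (\<alpha> * \<beta>)"
  have ee: "0 \<le> eta * eta" by simp
  have hX: "4 - eta + eta * eta / 16 \<le> X" using h unfolding X_def .
  have "1 - eta \<le> X / 2 - 1" using hX ee eta by linarith
  moreover have "\<alpha> * \<beta> - (2 - \<alpha> * \<alpha> - \<beta> * \<beta>) / 2 = X / 2 - 1"
    unfolding X_def by (simp add: field_simps)
  ultimately have key: "\<alpha> * \<beta> - (2 - \<alpha> * \<alpha> - \<beta> * \<beta>) / 2 \<ge> 1 - eta" by simp
  have "p \<bullet> (T *v q) \<ge> \<alpha> * \<beta> * r - r * ((2 - \<alpha> * \<alpha> - \<beta> * \<beta>) / 2)"
    using main b1 mult_left_mono[OF b2 r0] by linarith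
  moreover have "r * (1 - eta) \<le> r * (\<alpha> * \<beta> - (2 - \<alpha> * \<alpha> - \<beta> * \<beta>) / 2)"
    using mult_left_mono[OF key r0] .
  ultimately show ?thesis by (simp add: algebra_simps)
qed


theorem lemma1:
  fixes Cxx :: "real^'dx^'dx" and Cxy :: "real^'dy^'dx" and Cyy :: "real^'dy^'dy"
    and rho1 :: real and a1 :: "real^'dx" and b1 :: "real^'dy"
    and u :: "real^'dx" and v :: "real^'dy" and eta :: real
  assumes cov: "cov_blocks Cxx Cxy Cyy"
    and top: "top_sing_pair (Tmat Cxx Cxy Cyy) rho1 a1 b1"
    and uniq: "\<forall>a b. sing_pair (Tmat Cxx Cxy Cyy) rho1 a b \<longrightarrow>
                  (a = a1 \<and> b = b1) \<or> (a = - a1 \<and> b = - b1)"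
    and eta: "0 < eta" "eta < 1"
    and nz: "u \<noteq> 0" "v \<noteq> 0"
    and al: "align Cxx Cyy u v (minvsqrt Cxx *v a1) (minvsqrt Cyy *v b1) \<ge> 1 - eta / 8"
  shows "(u \<bullet> (Cxy *v v)) / (sqrt (u \<bullet> (Cxx *v u)) * sqrt (v \<bullet> (Cyy *v v)))
           \<ge> rho1 * (1 - eta)"
proof -
  have pdx: "pd_mat Cxx" and pdy: "pd_mat Cyy" using cov unfolding cov_blocks_def by auto
  define Sx where "Sx = msqrt Cxx"
  define Sy where "Sy = msqrt Cyy"
  define Wx where "Wx = minvsqrt Cxx"
  define Wy where "Wy = minvsqrt Cyy"
  define T where "T = Tmat Cxx Cxy Cyy"
  note fx = sqrt_facts[OF pdx, folded Sx_def Wx_def]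
  note fy = sqrt_facts[OF pdy, folded Sy_def Wy_def]
  have Tv: "T *v q = Wx *v (Cxy *v (Wy *v q))" for q
    unfolding T_def Tmat_def Wx_def Wy_def by (simp add: matrix_vector_mul_assoc matrix_mul_assoc)
  define su where "su = Sx *v u"
  define sv where "sv = Sy *v v"
  have su0: "su \<noteq> 0" using fx(4)[of u] nz(1) unfolding su_def by force
  have sv0: "sv \<noteq> 0" using fy(4)[of v] nz(2) unfolding sv_def by force
  have Cu: "u \<bullet> (Cxx *v u) = su \<bullet> su" unfolding su_def
    using fx(2)[of u] symdot[OF fx(1), of u "Sx *v u"] by simp
  have Cv: "v \<bullet> (Cyy *v v) = sv \<bullet> sv" unfolding sv_def
    using fy(2)[of v] symdot[OF fy(1), of v "Sy *v v"] by simp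
  have sqx: "sqrt (u \<bullet> (Cxx *v u)) = norm su" unfolding Cu by (simp add: norm_eq_sqrt_inner)
  have sqy: "sqrt (v \<bullet> (Cyy *v v)) = norm sv" unfolding Cv by (simp add: norm_eq_sqrt_inner)
  define p where "p = (1 / norm su) *\<^sub>R su"
  define q where "q = (1 / norm sv) *\<^sub>R sv"
  have np: "norm p = 1" "norm q = 1" unfolding p_def q_def using su0 sv0 by simp_all
  have Tq: "T *v q = (1 / norm sv) *\<^sub>R (Wx *v (Cxy *v v))"
    unfolding Tv q_def sv_def by (simp add: matrix_vector_mult_scaleR fy(4))
  have "p \<bullet> (T *v q) = (1 / norm su) * (1 / norm sv) * (su \<bullet> (Wx *v (Cxy *v v)))"
    unfolding Tq p_def by simp
  also have "su \<bullet> (Wx *v (Cxy *v v)) = u \<bullet> (Cxy *v v)"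
    unfolding su_def Wx_def using fx(5)[of "Sx *v u" "Cxy *v v"] fx(4)[of u] by (simp add: Wx_def)
  finally have lhs: "p \<bullet> (T *v q) = (u \<bullet> (Cxy *v v)) / (sqrt (u \<bullet> (Cxx *v u)) * sqrt (v \<bullet> (Cyy *v v)))"
    unfolding sqx sqy by simp
  have ax: "u \<bullet> (Cxx *v (Wx *v a1)) / norm (Sx *v u) = p \<bullet> a1"
  proof -
    have "Cxx *v (Wx *v a1) = Sx *v a1" using fx(2)[of "Wx *v a1", symmetric] fx(3)[of a1] by simp
    moreover have "u \<bullet> (Sx *v a1) = su \<bullet> a1" unfolding su_def by (rule symdot[OF fx(1)])
    ultimately show ?thesis unfolding p_def su_def by simp
  qed
  have ay: "v \<bullet> (Cyy *v (Wy *v b1)) / norm (Sy *v v) = q \<bullet> b1"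
  proof -
    have "Cyy *v (Wy *v b1) = Sy *v b1" using fy(2)[of "Wy *v b1", symmetric] fy(3)[of b1] by simp
    moreover have "v \<bullet> (Sy *v b1) = sv \<bullet> b1" unfolding sv_def by (rule symdot[OF fy(1)])
    ultimately show ?thesis unfolding q_def sv_def by simp
  qed
  have al': "(p \<bullet> a1 + q \<bullet> b1) / 2 \<ge> 1 - eta / 8"
    using al unfolding align_def Sx_def[symmetric] Sy_def[symmetric] Wx_def[symmetric] Wy_def[symmetric] ax ay
    by simp
  have sp: "sing_pair T rho1 a1 b1" using top unfolding top_sing_pair_def T_def by simp
  have "p \<bullet> (T *v q) \<ge> rho1 * (1 - eta)"
    using final_alg[OF np(1) np(2) _ _ _ _ _ _ al' eta] sp opnorm_top[OF top[folded T_def]]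
    unfolding sing_pair_def by blast
  thus ?thesis unfolding lhs .
qed

end
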